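(* Let $G=K_n$ with $n\ge2$, $F$ regular, $T=F^{-1}(1-1/n)$ (so $F(T)=1-1/n$), and $p=T\cdot(1-1/n)^{n-1}$. Then $T\cdot\mathbf{1}\in\mathcal{N}_{p\cdot\mathbf{1}}$ and $$\mathcal{R}(p\cdot\mathbf{1},T\cdot\mathbf{1})=n\,T\,(1-F(T))\,F(T)^{n-1}\ \ge\ \tfrac14\,\mathcal{R}^M_n.$$
   Context: Public-goods pricing game on the complete graph $K_n$: buyer $i$'s neighbours are all $j\neq i$. Values $v_i$ i.i.d. with cumulative distribution function $F$, $F(\infty)=1$. An equilibrium for $\mathbf{p}$ is $\mathbf{T}\in[0,\infty]^n$ (buyer $i$ purchases iff $v_i\ge T_i$) with $T_i=p_i/\prod_{j\neq i}F(T_j)$ for all $i$; $\mathcal{N}_{\mathbf{p}}$ is the set of equilibria; $\mathcal{R}(\mathbf{p},\mathbf{T})=\sum_ip_i(1-F(T_i))$; $p\cdot\mathbf{1}$ is the uniform price vector. $F$ is regular: atomless, supported on an interval in $[0,\infty)$ with positive density $f$ there, and $\phi(x)=x-\frac{1-F(x)}{f(x)}$ non-decreasing. $F^{-1}(q)=\min\{x:F(x)=q\}$. $\mathcal{R}^M_n=\mathbb{E}[\max_i\phi(v_i)^+]$ for $v_1,\dots,v_n$ i.i.d. $F$ (the optimal single-item auction revenue with $n$ such bidders). *)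

theory Defs
  imports "HOL-Analysis.Analysis"
begin

definition Fext :: "(real \<Rightarrow> real) \<Rightarrow> ereal \<Rightarrow> real" where
  "Fext F x = (case x of ereal r \<Rightarrow> F r | PInfty \<Rightarrow> 1 | MInfty \<Rightarrow> 0)"

definition vv :: "(real \<Rightarrow> real) \<Rightarrow> (real \<Rightarrow> real) \<Rightarrow> real \<Rightarrow> real" where
  "vv F f x = x - (1 - F x) / f x"

definition regular :: "(real \<Rightarrow> real) \<Rightarrow> (real \<Rightarrow> real) \<Rightarrow> bool" where
  "regular F f \<longleftrightarrow> (\<exists>I. is_interval I \<and> I \<noteq> {} \<and> I \<subseteq> {0..} \<and>
      (\<forall>x\<in>I. f x > 0) \<and>
      (\<forall>x. ((\<lambda>t. if t \<in> I then f t else 0) has_integral F x) {..x}) \<and>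
      (F \<longlongrightarrow> 1) at_top \<and>
      mono_on I (vv F f))"

definition Finv :: "(real \<Rightarrow> real) \<Rightarrow> real \<Rightarrow> real" where
  "Finv F q = (LEAST x. F x = q)"

text \<open>Equilibria of the pricing game on K_n (buyers 0..n-1). Thresholds live in [0,oo];
  a division by a zero product is read as oo.\<close>
definition equilibrium :: "(real \<Rightarrow> real) \<Rightarrow> nat \<Rightarrow> (nat \<Rightarrow> real) \<Rightarrow> (nat \<Rightarrow> ereal) \<Rightarrow> bool" where
  "equilibrium F n p T \<longleftrightarrow> (\<forall>i<n. 0 \<le> T i \<and>
     T i = (let P = (\<Prod>j\<in>{..<n} - {i}. Fext F (T j)) in
            if P = 0 then \<infinity> else ereal (p i / P)))"

definition revenue :: "(real \<Rightarrow> real) \<Rightarrow> nat \<Rightarrow> (nat \<Rightarrow> real) \<Rightarrow> (nat \<Rightarrow> ereal) \<Rightarrow> real" where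
  "revenue F n p T = (\<Sum>i<n. p i * (1 - Fext F (T i)))"

text \<open>Optimal single-item auction revenue E[max_i phi(v_i)^+], v_i iid with CDF F.\<close>
definition myerson_rev :: "(real \<Rightarrow> real) \<Rightarrow> (real \<Rightarrow> real) \<Rightarrow> nat \<Rightarrow> ennreal" where
  "myerson_rev F f n = (\<integral>\<^sup>+ v. ennreal (Max ((\<lambda>i. max 0 (vv F f (v i))) ` {..<n}))
       \<partial>(PiM {..<n} (\<lambda>_. interval_measure F)))"

end

theory Submission
  imports Defs "HOL-Probability.Probability"
begin

locale regset =
  fixes F f :: "real \<Rightarrow> real" and I :: "real set"
  assumes I_int: "is_interval I" and I_ne: "I \<noteq> {}" and I_nonneg: "I \<subseteq> {0..}"
    and fpos: "\<And>x. x \<in> I \<Longrightarrow> f x > 0"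
    and Fint: "\<And>x. ((\<lambda>t. if t \<in> I then f t else 0) has_integral F x) {..x}"
    and Flim: "(F \<longlongrightarrow> 1) at_top"
    and vvmono: "mono_on I (vv F f)"
begin

definition g :: "real \<Rightarrow> real" where "g t = (if t \<in> I then f t else 0)"

lemma g_nonneg: "0 \<le> g x"
  using fpos[of x] by (auto simp: g_def less_imp_le)

lemma Fint': "(g has_integral F x) {..x}"
  using Fint[of x] unfolding g_def .

lemma g_leb: "g \<in> borel_measurable lebesgue"
proof (rule borel_measurable_LIMSEQ_real)
  show "(\<lambda>x. g x * indicator {..real m} x) \<in> borel_measurable lebesgue" for m
    by (rule has_integral_implies_lebesgue_measurable_real[OF Fint'])
  fix x :: real
  obtain N :: nat where N: "x \<le> real N" using real_arch_simple by blast
  have "eventually (\<lambda>m. g x * indicator {..real m} x = g x) sequentially"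
    unfolding eventually_sequentially
    by (rule exI[of _ N]) (use N in \<open>auto simp: indicator_def\<close>)
  then show "(\<lambda>m. g x * indicator {..real m} x) \<longlonglongrightarrow> g x"
    by (rule tendsto_eventually)
qed

lemma ex_gb: "\<exists>h. h \<in> borel_measurable borel \<and> (\<forall>x. 0 \<le> h x) \<and> (AE x in lborel. g x = h x)"
proof -
  obtain h0 where h0: "h0 \<in> borel_measurable lborel" "AE x in lborel. g x = h0 x"
    using completion_ex_borel_measurable_real[OF g_leb] by blast
  show ?thesis
  proof (intro exI conjI allI)
    show "(\<lambda>x. max 0 (h0 x)) \<in> borel_measurable borel" using h0(1) by simp
    show "0 \<le> max 0 (h0 x)" for x by simp
    show "AE x in lborel. g x = max 0 (h0 x)"
      using h0(2) by eventually_elim (use g_nonneg in \<open>metis max.absorb2\<close>)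
  qed
qed

definition gb :: "real \<Rightarrow> real" where
  "gb = (SOME h. h \<in> borel_measurable borel \<and> (\<forall>x. 0 \<le> h x) \<and> (AE x in lborel. g x = h x))"

lemma gb: "gb \<in> borel_measurable borel" "\<And>x. 0 \<le> gb x" "AE x in lborel. g x = gb x"
  using someI_ex[OF ex_gb] unfolding gb_def[symmetric] by auto

lemma gb_meas[measurable]: "gb \<in> borel_measurable borel"
  by (rule gb(1))

lemma F_nonneg: "0 \<le> F x"
  using has_integral_nonneg[OF Fint'] g_nonneg by blast

lemma int_Iic: "(\<integral>\<^sup>+t. ennreal (gb t) * indicator {..x} t \<partial>lborel) = ennreal (F x)"
proof -
  have "(\<integral>\<^sup>+t. ennreal (gb t) * indicator {..x} t \<partial>lborel) =
        (\<integral>\<^sup>+t. ennreal (g t) * indicator {..x} t \<partial>lborel)"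
    using gb(3) by (intro nn_integral_cong_AE) auto
  also have "\<dots> = ennreal (F x)"
    by (rule nn_integral_has_integral_lebesgue'[OF _ Fint']) (simp add: g_nonneg)
  finally show ?thesis .
qed

definition nu :: "real measure" where "nu = density lborel (\<lambda>t. ennreal (gb t))"

lemma sets_nu[simp, measurable_cong]: "sets nu = sets borel"
  by (simp add: nu_def)

lemma space_nu[simp]: "space nu = UNIV"
  by (simp add: nu_def)

lemma nu_Iic: "emeasure nu {..x} = ennreal (F x)"
  unfolding nu_def by (subst emeasure_density) (auto simp: int_Iic)

lemma F_mono: "x \<le> y \<Longrightarrow> F x \<le> F y"
proof -
  assume "x \<le> y"
  then have "emeasure nu {..x} \<le> emeasure nu {..y}"
    by (intro emeasure_mono) auto
  then show ?thesis using nu_Iic F_nonneg by simp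
qed

lemma nu_UNIV: "emeasure nu UNIV = 1"
proof -
  have "(SUP m. emeasure nu {..real m}) = emeasure nu (\<Union>m. {..real m})"
    by (rule SUP_emeasure_incseq) (auto simp: incseq_def)
  also have "(\<Union>m. {..real m}) = UNIV"
    by (auto intro: real_arch_simple)
  finally have eq: "(SUP m. ennreal (F (real m))) = emeasure nu UNIV"
    by (simp add: nu_Iic)
  have inc: "incseq (\<lambda>m. ennreal (F (real m)))"
    by (auto simp: incseq_def intro!: ennreal_leI F_mono)
  have "(\<lambda>m. ennreal (F (real m))) \<longlonglongrightarrow> ennreal 1"
    by (intro tendsto_ennrealI filterlim_compose[OF Flim filterlim_real_sequentially])
  with LIMSEQ_SUP[OF inc] have "(SUP m. ennreal (F (real m))) = 1"
    using LIMSEQ_unique by fastforce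
  with eq show ?thesis by simp
qed

lemma nu_dist: "real_distribution nu"
  unfolding real_distribution_def real_distribution_axioms_def
  by (auto intro!: prob_spaceI simp: nu_UNIV)

interpretation nu: real_distribution nu by (rule nu_dist)

lemma cdf_nu: "cdf nu = F"
  by (auto simp: fun_eq_iff cdf_def measure_def nu_Iic F_nonneg)

lemma nu_single: "emeasure nu {x} = 0"
proof -
  have ae: "AE t in lborel. ennreal (gb t) * indicator {x} t = 0"
    using AE_lborel_singleton[of x] by eventually_elim auto
  then have "(\<integral>\<^sup>+t. ennreal (gb t) * indicator {x} t \<partial>lborel) = 0"
    by (subst nn_integral_cong_AE[OF ae]) simp
  then show ?thesis
    unfolding nu_def by (subst emeasure_density) auto
qed

lemma F_cont: "isCont F x"
  using nu.isCont_cdf[of x] nu_single by (simp add: cdf_nu measure_def)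

lemma F_le1: "F x \<le> 1"
  using nu.cdf_bounded_prob[of x] by (simp add: cdf_nu)

lemma nu_Ioc: "a \<le> b \<Longrightarrow> emeasure nu {a<..b} = ennreal (F b - F a)"
  using nu.emeasure_Ioc[of a b] by (simp add: cdf_nu)

lemma interval_measure_eq: "interval_measure F = nu"
proof (rule cdf_unique)
  show "real_distribution (interval_measure F)"
    by (rule real_distribution_interval_measure)
      (auto simp: F_mono continuous_at_imp_continuous_within[OF F_cont] Flim
         nu.cdf_lim_at_bot[unfolded cdf_nu])
  then show "cdf (interval_measure F) = cdf nu"
    by (subst cdf_interval_measure) (auto simp: cdf_nu F_mono
         continuous_at_imp_continuous_within[OF F_cont] nu.cdf_lim_at_bot[unfolded cdf_nu])
qed (rule nu_dist)

lemma int_Iic_g: "(\<integral>\<^sup>+t. ennreal (g t) * indicator {..x} t \<partial>lborel) = ennreal (F x)"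
  by (rule nn_integral_has_integral_lebesgue'[OF _ Fint']) (simp add: g_nonneg)

lemma g_out: "t \<notin> I \<Longrightarrow> g t = 0"
  by (simp add: g_def)

lemma F_below: assumes "\<And>t. t \<in> I \<Longrightarrow> x \<le> t" shows "F x = 0"
proof -
  have ae: "AE t in lborel. ennreal (g t) * indicator {..x} t = 0"
    using AE_lborel_singleton[of x]
  proof eventually_elim
    fix t assume "t \<noteq> x"
    show "ennreal (g t) * indicator {..x} t = 0"
    proof (cases "t \<le> x")
      case True
      with \<open>t \<noteq> x\<close> assms have "t \<notin> I" by force
      then show ?thesis by (simp add: g_out)
    qed simp
  qed
  have "ennreal (F x) = 0"
    unfolding int_Iic_g[symmetric] by (subst nn_integral_cong_AE[OF ae]) simp
  then show ?thesis using F_nonneg[of x] by simp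
qed

lemma F_zero_nonpos: "x \<le> 0 \<Longrightarrow> F x = 0"
  by (rule F_below) (use I_nonneg in force)

lemma F_above: assumes "\<And>t. t \<in> I \<Longrightarrow> t \<le> x" shows "F x = 1"
proof -
  have ae: "AE t in lborel. ennreal (gb t) * indicator {x<..} t = 0"
    using gb(3)
  proof eventually_elim
    fix t assume gt: "g t = gb t"
    show "ennreal (gb t) * indicator {x<..} t = 0"
    proof (cases "x < t")
      case True
      with assms have "t \<notin> I" by force
      then show ?thesis using gt by (simp add: g_out)
    qed simp
  qed
  have "emeasure nu {x<..} = (\<integral>\<^sup>+t. ennreal (gb t) * indicator {x<..} t \<partial>lborel)"
    unfolding nu_def by (subst emeasure_density) auto
  also have "\<dots> = 0" by (subst nn_integral_cong_AE[OF ae]) simp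
  finally have z: "emeasure nu {x<..} = 0" .
  have "emeasure nu UNIV = emeasure nu {..x} + emeasure nu {x<..}"
    by (subst plus_emeasure) (auto intro!: arg_cong[where f="emeasure nu"])
  then have "ennreal (F x) = 1" using z nu_UNIV nu_Iic by simp
  then show ?thesis using F_nonneg[of x] by simp
qed

lemma F_contOn: "continuous_on UNIV F"
  using F_cont by (simp add: continuous_at_imp_continuous_on)

context
  fixes q :: real
  assumes q: "0 < q" "q < 1"
begin

definition S where "S = {x. F x = q}"

lemma S_closed: "closed S"
  unfolding S_def by (intro closed_Collect_eq F_contOn continuous_on_const)

lemma S_pos: "x \<in> S \<Longrightarrow> 0 < x"
  using F_zero_nonpos[of x] q unfolding S_def by force

lemma S_ne: "S \<noteq> {}"
proof -
  have "eventually (\<lambda>x. F x > q) at_top"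
    using Flim q by (simp add: order_tendsto_iff)
  then obtain b where b: "\<And>x. x \<ge> b \<Longrightarrow> F x > q"
    by (auto simp: eventually_at_top_linorder)
  define b' where "b' = max b 0"
  have "F 0 \<le> q" "q \<le> F b'" using F_zero_nonpos[of 0] q b[of b'] by (auto simp: b'_def)
  from IVT[of F 0 q b', OF this] obtain x where "F x = q"
    using F_cont by (force simp: b'_def)
  then show ?thesis unfolding S_def by blast
qed

definition T0 where "T0 = Inf S"

lemma T0_in: "T0 \<in> S"
  unfolding T0_def
  by (rule closed_contains_Inf[OF S_ne _ S_closed]) (use S_pos in \<open>auto simp: bdd_below_def intro!: exI[of _ 0] less_imp_le\<close>)

lemma FT0: "F T0 = q" using T0_in by (simp add: S_def)

lemma T0_pos: "0 < T0" using T0_in S_pos by blast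

lemma Finv_eq: "Finv F q = T0"
  unfolding Finv_def
proof (rule Least_equality)
  show "F T0 = q" by (rule FT0)
  fix y assume "F y = q"
  then show "T0 \<le> y" unfolding T0_def
    by (intro cInf_lower) (use S_pos in \<open>auto simp: S_def bdd_below_def intro: less_imp_le\<close>)
qed

lemma T0_in_I: "T0 \<in> I"
proof (rule ccontr)
  assume nI: "T0 \<notin> I"
  show False
  proof (cases "\<exists>y\<in>I. y < T0")
    case True
    then obtain y where y: "y \<in> I" "y < T0" by blast
    have "t \<le> T0" if "t \<in> I" for t
    proof (rule ccontr)
      assume "\<not> t \<le> T0"
      then have "T0 \<in> I" using I_int y that unfolding is_interval_1 by (meson less_imp_le not_le)
      with nI show False by simp
    qed
    then have "F T0 = 1" by (rule F_above)
    with FT0 q show False by simp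
  next
    case False
    then have "F T0 = 0" by (intro F_below) (simp add: not_less)
    with FT0 q show False by simp
  qed
qed

end

lemma nu_dens: "A \<in> sets borel \<Longrightarrow> emeasure nu A = (\<integral>\<^sup>+t. ennreal (gb t) * indicator A t \<partial>lborel)"
  unfolding nu_def by (subst emeasure_density) auto

lemma ibp:
  assumes "a \<le> b"
  shows "(\<integral>\<^sup>+x. ennreal (gb x) * ennreal (x - a) * indicator {a<..b} x \<partial>lborel)
       = (\<integral>\<^sup>+s. ennreal (F b - F s) * indicator {a..b} s \<partial>lborel)"
proof -
  define H where "H = (\<lambda>s x. ennreal (gb x) * indicator {a<..b} x * indicator {a..<x} s)"
  have meas: "case_prod H \<in> borel_measurable (lborel \<Otimes>\<^sub>M lborel)"
  proof -
    have "case_prod H = (\<lambda>p. ennreal (gb (snd p)) * indicator {a<..b} (snd p) *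
        indicator {p. a \<le> fst p \<and> fst p < snd p} p)"
      by (auto simp: H_def fun_eq_iff indicator_def)
    also have "\<dots> \<in> borel_measurable (lborel \<Otimes>\<^sub>M lborel)"
      by measurable
    finally show ?thesis .
  qed
  have "(\<integral>\<^sup>+x. ennreal (gb x) * ennreal (x - a) * indicator {a<..b} x \<partial>lborel)
      = (\<integral>\<^sup>+x. (\<integral>\<^sup>+s. H s x \<partial>lborel) \<partial>lborel)"
  proof (intro nn_integral_cong)
    fix x :: real
    have "(\<integral>\<^sup>+s. H s x \<partial>lborel) = ennreal (gb x) * indicator {a<..b} x * emeasure lborel {a..<x}"
      unfolding H_def by (rule nn_integral_cmult_indicator) simp
    also have "\<dots> = ennreal (gb x) * ennreal (x - a) * indicator {a<..b} x"
      by (cases "a < x") (auto simp: indicator_def)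
    finally show "ennreal (gb x) * ennreal (x - a) * indicator {a<..b} x = (\<integral>\<^sup>+s. H s x \<partial>lborel)" by simp
  qed
  also have "\<dots> = (\<integral>\<^sup>+s. (\<integral>\<^sup>+x. H s x \<partial>lborel) \<partial>lborel)"
    by (rule lborel_pair.Fubini'[OF meas])
  also have "\<dots> = (\<integral>\<^sup>+s. ennreal (F b - F s) * indicator {a..b} s \<partial>lborel)"
  proof (intro nn_integral_cong)
    fix s :: real
    have "(\<integral>\<^sup>+x. H s x \<partial>lborel) = (\<integral>\<^sup>+x. indicator {a..b} s * (ennreal (gb x) * indicator {s<..b} x) \<partial>lborel)"
      by (intro nn_integral_cong) (auto simp: H_def indicator_def)
    also have "\<dots> = indicator {a..b} s * emeasure nu {s<..b}"
      by (subst nn_integral_cmult) (auto simp: nu_dens)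
    also have "\<dots> = ennreal (F b - F s) * indicator {a..b} s"
      by (cases "s \<in> {a..b}") (auto simp: nu_Ioc)
    finally show "(\<integral>\<^sup>+x. H s x \<partial>lborel) = ennreal (F b - F s) * indicator {a..b} s" .
  qed
  finally show ?thesis .
qed

lemma F_meas[measurable]: "F \<in> borel_measurable borel"
  by (rule borel_measurable_continuous_onI[OF F_contOn])

lemma int_gb_Ioc: "a \<le> b \<Longrightarrow> (\<integral>\<^sup>+x. ennreal (gb x) * indicator {a<..b} x \<partial>lborel) = ennreal (F b - F a)"
  using nu_dens[of "{a<..b}"] nu_Ioc[of a b] by simp

lemma lin_split:
  assumes "a \<le> b" "k \<le> a"
  shows "(\<integral>\<^sup>+x. ennreal ((x - k) * gb x) * indicator {a<..b} x \<partial>lborel)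
    = (\<integral>\<^sup>+s. ennreal (F b - F s) * indicator {a<..b} s \<partial>lborel) + ennreal ((a - k) * (F b - F a))"
proof -
  have "(\<integral>\<^sup>+x. ennreal ((x - k) * gb x) * indicator {a<..b} x \<partial>lborel)
      = (\<integral>\<^sup>+x. ennreal (gb x) * ennreal (x - a) * indicator {a<..b} x
            + ennreal (a - k) * (ennreal (gb x) * indicator {a<..b} x) \<partial>lborel)"
  proof (intro nn_integral_cong)
    fix x :: real
    show "ennreal ((x - k) * gb x) * indicator {a<..b} x =
      ennreal (gb x) * ennreal (x - a) * indicator {a<..b} x + ennreal (a - k) * (ennreal (gb x) * indicator {a<..b} x)"
    proof (cases "x \<in> {a<..b}")
      case True
      then have "(x - k) * gb x = gb x * (x - a) + (a - k) * gb x" by algebra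
      moreover have "0 \<le> gb x * (x - a)" "0 \<le> (a - k) * gb x" using True assms gb(2)[of x] by auto
      ultimately have "ennreal ((x - k) * gb x) = ennreal (gb x) * ennreal (x - a) + ennreal (a - k) * ennreal (gb x)"
        using True assms gb(2)[of x] by (simp add: ennreal_mult)
      then show ?thesis using True by simp
    qed simp
  qed
  also have "\<dots> = (\<integral>\<^sup>+x. ennreal (gb x) * ennreal (x - a) * indicator {a<..b} x \<partial>lborel)
      + ennreal (a - k) * (\<integral>\<^sup>+x. ennreal (gb x) * indicator {a<..b} x \<partial>lborel)"
    by (subst nn_integral_add) (auto simp: nn_integral_cmult)
  also have "\<dots> = (\<integral>\<^sup>+s. ennreal (F b - F s) * indicator {a..b} s \<partial>lborel) + ennreal (a - k) * ennreal (F b - F a)"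
    using assms by (simp add: ibp int_gb_Ioc)
  also have "(\<integral>\<^sup>+s. ennreal (F b - F s) * indicator {a..b} s \<partial>lborel) = (\<integral>\<^sup>+s. ennreal (F b - F s) * indicator {a<..b} s \<partial>lborel)"
    apply (rule nn_integral_cong_AE)
    using AE_lborel_singleton[of a] by eventually_elim (auto simp: indicator_def)
  also have "ennreal (a - k) * ennreal (F b - F a) = ennreal ((a - k) * (F b - F a))"
    using assms F_mono[of a b] by (subst ennreal_mult) auto
  finally show ?thesis .
qed

lemma one_minus_split:
  assumes "a \<le> b"
  shows "(\<integral>\<^sup>+x. ennreal (1 - F x) * indicator {a<..b} x \<partial>lborel)
    = (\<integral>\<^sup>+s. ennreal (F b - F s) * indicator {a<..b} s \<partial>lborel) + ennreal ((1 - F b) * (b - a))"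
proof -
  have "(\<integral>\<^sup>+x. ennreal (1 - F x) * indicator {a<..b} x \<partial>lborel)
     = (\<integral>\<^sup>+x. ennreal (F b - F x) * indicator {a<..b} x + ennreal (1 - F b) * indicator {a<..b} x \<partial>lborel)"
  proof (intro nn_integral_cong)
    fix x :: real
    show "ennreal (1 - F x) * indicator {a<..b} x = ennreal (F b - F x) * indicator {a<..b} x + ennreal (1 - F b) * indicator {a<..b} x"
    proof (cases "x \<in> {a<..b}")
      case True
      then have "F x \<le> F b" by (intro F_mono) auto
      then have "ennreal (1 - F x) = ennreal (F b - F x) + ennreal (1 - F b)"
        using F_le1[of b] by (subst ennreal_plus[symmetric]) auto
      then show ?thesis using True by simp
    qed simp
  qed
  also have "\<dots> = (\<integral>\<^sup>+s. ennreal (F b - F s) * indicator {a<..b} s \<partial>lborel) + ennreal (1 - F b) * emeasure lborel {a<..b}"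
    by (subst nn_integral_add) (auto simp: nn_integral_cmult_indicator)
  also have "ennreal (1 - F b) * emeasure lborel {a<..b} = ennreal ((1 - F b) * (b - a))"
    using assms F_le1[of b] by (simp add: ennreal_mult)
  finally show ?thesis .
qed

lemma C_fin: "(\<integral>\<^sup>+s. ennreal (F b - F s) * indicator {a<..b} s \<partial>lborel) \<noteq> \<infinity>"
proof (cases "a \<le> b")
  case True
  have "(\<integral>\<^sup>+s. ennreal (F b - F s) * indicator {a<..b} s \<partial>lborel) \<le> (\<integral>\<^sup>+s. 1 * indicator {a<..b} s \<partial>lborel)"
    by (intro nn_integral_mono) (auto simp: indicator_def intro!: ennreal_leI,
        smt (verit) F_le1 F_nonneg)
  also have "\<dots> = ennreal (b - a)" using True by (subst nn_integral_cmult_indicator) auto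
  finally show ?thesis by (auto simp: top_unique)
next
  case False
  then show ?thesis by (simp add: indicator_def)
qed

lemma low:
  assumes "k \<le> 0" "0 \<le> b"
    and hyp: "\<And>x. 0 \<le> x \<Longrightarrow> x \<le> b \<Longrightarrow> (x - k) * g x \<le> 1 - F x"
  shows "- k * F b \<le> b * (1 - F b)"
proof -
  let ?C = "(\<integral>\<^sup>+s. ennreal (F b - F s) * indicator {0<..b} s \<partial>lborel)"
  have "(\<integral>\<^sup>+x. ennreal ((x - k) * gb x) * indicator {0<..b} x \<partial>lborel)
      \<le> (\<integral>\<^sup>+x. ennreal (1 - F x) * indicator {0<..b} x \<partial>lborel)"
  proof (rule nn_integral_mono_AE)
    show "AE x in lborel. ennreal ((x - k) * gb x) * indicator {0<..b} x \<le> ennreal (1 - F x) * indicator {0<..b} x"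
      using gb(3) by eventually_elim (auto simp: indicator_def intro!: ennreal_leI dest: hyp[rotated])
  qed
  then have "?C + ennreal ((0 - k) * (F b - F 0)) \<le> ?C + ennreal ((1 - F b) * (b - 0))"
    using assms by (simp add: lin_split one_minus_split)
  then have "ennreal ((0 - k) * (F b - F 0)) \<le> ennreal ((1 - F b) * (b - 0))"
    using C_fin by (simp add: ennreal_add_left_cancel_le)
  moreover have "b * F b \<le> b" using mult_left_mono[OF F_le1[of b] \<open>0 \<le> b\<close>] by simp
  moreover have "k * F b \<le> 0" using assms F_nonneg[of b] by (simp add: mult_nonpos_nonneg)
  ultimately show ?thesis using F_zero_nonpos[of 0] F_le1[of b] assms
    by (auto simp add: ennreal_le_iff2 algebra_simps)
qed

lemma up_b:
  assumes "a \<le> b" "k \<le> a"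
    and hyp: "\<And>x. a < x \<Longrightarrow> x \<le> b \<Longrightarrow> 1 - F x \<le> (x - k) * g x"
  shows "(\<integral>\<^sup>+x. ennreal ((x - k) * gb x - (1 - F x)) * indicator {a<..b} x \<partial>lborel) \<le> ennreal ((a - k) * (1 - F a))"
proof -
  let ?X = "(\<integral>\<^sup>+x. ennreal ((x - k) * gb x - (1 - F x)) * indicator {a<..b} x \<partial>lborel)"
  let ?C = "(\<integral>\<^sup>+s. ennreal (F b - F s) * indicator {a<..b} s \<partial>lborel)"
  have "?X + (\<integral>\<^sup>+x. ennreal (1 - F x) * indicator {a<..b} x \<partial>lborel)
      = (\<integral>\<^sup>+x. ennreal ((x - k) * gb x - (1 - F x)) * indicator {a<..b} x + ennreal (1 - F x) * indicator {a<..b} x \<partial>lborel)"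
    by (subst nn_integral_add) auto
  also have "\<dots> = (\<integral>\<^sup>+x. ennreal ((x - k) * gb x) * indicator {a<..b} x \<partial>lborel)"
  proof (rule nn_integral_cong_AE)
    show "AE x in lborel. ennreal ((x - k) * gb x - (1 - F x)) * indicator {a<..b} x + ennreal (1 - F x) * indicator {a<..b} x
        = ennreal ((x - k) * gb x) * indicator {a<..b} x"
      using gb(3)
    proof eventually_elim
      fix x assume gx: "g x = gb x"
      show "ennreal ((x - k) * gb x - (1 - F x)) * indicator {a<..b} x + ennreal (1 - F x) * indicator {a<..b} x
        = ennreal ((x - k) * gb x) * indicator {a<..b} x"
      proof (cases "x \<in> {a<..b}")
        case True
        then have h: "1 - F x \<le> (x - k) * gb x" using hyp[of x] gx by auto
        have "ennreal ((x - k) * gb x) = ennreal ((x - k) * gb x - (1 - F x)) + ennreal (1 - F x)"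
          using h F_le1[of x] by (subst ennreal_plus[symmetric]) auto
        then show ?thesis using True by simp
      qed simp
    qed
  qed
  finally have eq: "?X + (?C + ennreal ((1 - F b) * (b - a))) = ?C + ennreal ((a - k) * (F b - F a))"
    using assms by (simp add: lin_split one_minus_split)
  have "?C + ?X \<le> ?C + ?X + ennreal ((1 - F b) * (b - a))" by simp
  also have "\<dots> = ?C + ennreal ((a - k) * (F b - F a))" using eq by (simp add: ac_simps)
  finally have "?X \<le> ennreal ((a - k) * (F b - F a))"
    using C_fin by (simp add: ennreal_add_left_cancel_le)
  also have "\<dots> \<le> ennreal ((a - k) * (1 - F a))"
    using assms F_le1[of b] by (intro ennreal_leI mult_left_mono) auto
  finally show ?thesis .
qed

lemma up:
  assumes "k \<le> a"
    and hyp: "\<And>x. a < x \<Longrightarrow> 1 - F x \<le> (x - k) * g x"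
  shows "(\<integral>\<^sup>+x. ennreal ((x - k) * gb x - (1 - F x)) * indicator {a<..} x \<partial>lborel) \<le> ennreal ((a - k) * (1 - F a))"
proof -
  define u where "u = (\<lambda>m x. ennreal ((x - k) * gb x - (1 - F x)) * indicator {a<..a + real m} x)"
  have inc: "incseq u"
    by (auto simp: u_def incseq_def le_fun_def indicator_def intro!: mult_right_mono)
  have ptw: "ennreal ((x - k) * gb x - (1 - F x)) * indicator {a<..} x = (SUP m. u m x)" for x
  proof (cases "a < x")
    case True
    obtain m :: nat where m: "x - a \<le> real m" using real_arch_simple by blast
    show ?thesis
    proof (rule antisym)
      show "ennreal ((x - k) * gb x - (1 - F x)) * indicator {a<..} x \<le> (SUP m. u m x)"
        by (rule SUP_upper2[of m]) (use True m in \<open>auto simp: u_def indicator_def\<close>)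
      show "(SUP m. u m x) \<le> ennreal ((x - k) * gb x - (1 - F x)) * indicator {a<..} x"
        by (rule SUP_least) (auto simp: u_def indicator_def)
    qed
  next
    case False
    then show ?thesis by (simp add: u_def indicator_def)
  qed
  have "(\<integral>\<^sup>+x. ennreal ((x - k) * gb x - (1 - F x)) * indicator {a<..} x \<partial>lborel)
      = (\<integral>\<^sup>+x. (SUP m. u m x) \<partial>lborel)" by (simp add: ptw)
  also have "\<dots> = (SUP m. integral\<^sup>N lborel (u m))"
    by (rule nn_integral_monotone_convergence_SUP[OF inc]) (simp add: u_def)
  also have "\<dots> \<le> ennreal ((a - k) * (1 - F a))"
    by (rule SUP_least) (unfold u_def, rule up_b, use assms in auto)
  finally show ?thesis .
qed

definition phi where "phi = vv F f"

lemma AE_nu_I: "AE x in nu. x \<in> I"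
proof -
  have "AE x in lborel. 0 < ennreal (gb x) \<longrightarrow> x \<in> I"
    using gb(3) by eventually_elim (auto simp: g_def split: if_splits)
  then show ?thesis unfolding nu_def by (subst AE_density) auto
qed

context
  fixes q :: real
  assumes q: "0 < q" "q < 1"
begin

lemma main_bound:
  assumes n: "1 \<le> n" and qn: "1 - q = 1 / real n"
  shows "myerson_rev F f n \<le> ennreal (T0 q / q)"
proof -
  let ?T = "T0 q"
  have TI: "?T \<in> I" by (rule T0_in_I[OF q])
  have FT: "F ?T = q" by (rule FT0[OF q])
  have Tpos: "0 < ?T" by (rule T0_pos[OF q])
  define k where "k = phi ?T"
  have fT: "0 < f ?T" using fpos TI by blast
  have Tk: "?T - k = (1 - q) / f ?T" using FT by (simp add: k_def phi_def vv_def)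
  moreover have "0 \<le> (1 - q) / f ?T" using q fT by simp
  ultimately have Tk0: "k \<le> ?T" by linarith
  have phi_ge: "k \<le> phi x" if "x \<in> I" "?T \<le> x" for x
    using vvmono TI that unfolding k_def phi_def mono_on_def by blast
  have phi_le: "phi x \<le> k" if "x \<in> I" "x \<le> ?T" for x
    using vvmono TI that unfolding k_def phi_def mono_on_def by blast
  have beyond: "F x = 1" if "x \<notin> I" "?T < x" for x
  proof (rule F_above)
    fix t assume "t \<in> I"
    show "t \<le> x"
    proof (rule ccontr)
      assume "\<not> t \<le> x"
      then have "x \<in> I" using I_int TI \<open>t \<in> I\<close> that unfolding is_interval_1 by (meson less_imp_le not_le)
      with that show False by simp
    qed
  qed
  have hyp_up: "1 - F x \<le> (x - k) * g x" if "?T < x" for x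
  proof (cases "x \<in> I")
    case True
    then have fx: "0 < f x" by (rule fpos)
    have "k \<le> x - (1 - F x) / f x" using phi_ge[OF True] that by (simp add: phi_def vv_def)
    then show ?thesis using fx True by (simp add: g_def field_simps)
  next
    case False
    then show ?thesis using beyond[OF False that] by (simp add: g_def)
  qed
  have up': "(\<integral>\<^sup>+x. ennreal ((x - k) * gb x - (1 - F x)) * indicator {?T<..} x \<partial>lborel)
      \<le> ennreal ((?T - k) * (1 - F ?T))"
    by (rule up[OF Tk0 hyp_up])
  define h where "h x = (if x \<in> I \<inter> {?T<..} then phi x - k else 0)" for x
  have h_nonneg: "0 \<le> h x" for x using phi_ge[of x] by (auto simp: h_def)
  have h_meas[measurable]: "h \<in> borel_measurable borel"
  proof -
    have J: "I \<inter> {?T<..} \<in> sets borel"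
      using real_interval_borel_measurable[OF I_int] by auto
    have "mono_on (I \<inter> {?T<..}) (\<lambda>x. phi x - k)"
      using vvmono unfolding phi_def mono_on_def by auto
    then have "(\<lambda>x. phi x - k) \<in> borel_measurable (restrict_space borel (I \<inter> {?T<..}))"
      by (rule borel_measurable_mono_on_fnc)
    then show ?thesis unfolding h_def[abs_def]
      by (subst (asm) measurable_restrict_space_iff) (use J in auto)
  qed
  define c where "c = max 0 k"
  let ?M = "PiM {..<n} (\<lambda>_. nu)"
  have probM: "prob_space ?M" by (rule prob_space_PiM) (rule nu.prob_space_axioms)
  have AEI: "AE v in ?M. \<forall>i\<in>{..<n}. v i \<in> I"
    by (intro eventually_ball_finite ballI AE_PiM_component[where P="\<lambda>x. x \<in> I"]
        nu.prob_space_axioms AE_nu_I) auto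
  have "myerson_rev F f n = (\<integral>\<^sup>+ v. ennreal (Max ((\<lambda>i. max 0 (phi (v i))) ` {..<n})) \<partial>?M)"
    unfolding myerson_rev_def interval_measure_eq phi_def ..
  also have "\<dots> \<le> (\<integral>\<^sup>+ v. ennreal c + (\<Sum>i<n. ennreal (h (v i))) \<partial>?M)"
  proof (rule nn_integral_mono_AE)
    show "AE v in ?M. ennreal (Max ((\<lambda>i. max 0 (phi (v i))) ` {..<n})) \<le> ennreal c + (\<Sum>i<n. ennreal (h (v i)))"
      using AEI
    proof eventually_elim
      fix v assume vI: "\<forall>i\<in>{..<n}. v i \<in> I"
      have each: "max 0 (phi (v i)) \<le> c + (\<Sum>j<n. h (v j))" if i: "i < n" for i
      proof -
        have "max 0 (phi (v i)) \<le> c + h (v i)"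
        proof (cases "?T < v i")
          case True
          then show ?thesis using vI i phi_ge[of "v i"] by (auto simp: h_def c_def)
        next
          case False
          then show ?thesis using vI i phi_le[of "v i"] by (auto simp: h_def c_def)
        qed
        also have "h (v i) \<le> (\<Sum>j<n. h (v j))"
          using i by (intro member_le_sum) (auto simp: h_nonneg)
        finally show ?thesis by simp
      qed
      have "Max ((\<lambda>i. max 0 (phi (v i))) ` {..<n}) \<le> c + (\<Sum>j<n. h (v j))"
        using n each by (subst Max_le_iff) (auto simp: lessThan_empty_iff)
      moreover have "ennreal c + (\<Sum>i<n. ennreal (h (v i))) = ennreal (c + (\<Sum>j<n. h (v j)))"
        using h_nonneg by (simp add: c_def sum_nonneg)
      ultimately show "ennreal (Max ((\<lambda>i. max 0 (phi (v i))) ` {..<n})) \<le> ennreal c + (\<Sum>i<n. ennreal (h (v i)))"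
        by (simp add: ennreal_leI)
    qed
  qed
  also have "\<dots> = ennreal c + (\<Sum>i<n. (\<integral>\<^sup>+ v. ennreal (h (v i)) \<partial>?M))"
  proof -
    have "(\<integral>\<^sup>+ v. ennreal c + (\<Sum>i<n. ennreal (h (v i))) \<partial>?M)
        = (\<integral>\<^sup>+ v. ennreal c \<partial>?M) + (\<integral>\<^sup>+ v. (\<Sum>i<n. ennreal (h (v i))) \<partial>?M)"
      by (rule nn_integral_add) auto
    also have "(\<integral>\<^sup>+ v. (\<Sum>i<n. ennreal (h (v i))) \<partial>?M) = (\<Sum>i<n. (\<integral>\<^sup>+ v. ennreal (h (v i)) \<partial>?M))"
      by (rule nn_integral_sum) auto
    also have "(\<integral>\<^sup>+ v. ennreal c \<partial>?M) = ennreal c"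
      using prob_space.emeasure_space_1[OF probM] by simp
    finally show ?thesis .
  qed
  also have "\<dots> = ennreal c + (\<Sum>i<n. (\<integral>\<^sup>+ x. ennreal (h x) \<partial>nu))"
  proof -
    have "(\<integral>\<^sup>+ v. ennreal (h (v i)) \<partial>?M) = (\<integral>\<^sup>+ x. ennreal (h x) \<partial>nu)" if "i < n" for i
    proof -
      have "(\<integral>\<^sup>+ x. ennreal (h x) \<partial>nu) = (\<integral>\<^sup>+ x. ennreal (h x) \<partial>distr ?M nu (\<lambda>v. v i))"
        using distr_PiM_component[of "{..<n}" "\<lambda>_. nu" i] nu.prob_space_axioms that by simp
      also have "\<dots> = (\<integral>\<^sup>+ v. ennreal (h (v i)) \<partial>?M)"
        by (rule nn_integral_distr) (use that in auto)
      finally show ?thesis by simp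
    qed
    then show ?thesis by simp
  qed
  also have "\<dots> = ennreal c + of_nat n * (\<integral>\<^sup>+ x. ennreal (h x) \<partial>nu)" by simp
  also have "(\<integral>\<^sup>+ x. ennreal (h x) \<partial>nu) = (\<integral>\<^sup>+ x. ennreal (gb x) * ennreal (h x) \<partial>lborel)"
    unfolding nu_def by (rule nn_integral_density) auto
  also have "\<dots> = (\<integral>\<^sup>+x. ennreal ((x - k) * gb x - (1 - F x)) * indicator {?T<..} x \<partial>lborel)"
  proof (rule nn_integral_cong_AE)
    show "AE x in lborel. ennreal (gb x) * ennreal (h x) = ennreal ((x - k) * gb x - (1 - F x)) * indicator {?T<..} x"
      using gb(3)
    proof eventually_elim
      fix x assume gx: "g x = gb x"
      show "ennreal (gb x) * ennreal (h x) = ennreal ((x - k) * gb x - (1 - F x)) * indicator {?T<..} x"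
      proof (cases "?T < x")
        case True
        show ?thesis
        proof (cases "x \<in> I")
          case xI: True
          then have fx: "0 < f x" by (rule fpos)
          have "gb x * h x = (x - k) * gb x - (1 - F x)"
            using gx xI True fx by (simp add: h_def g_def phi_def vv_def field_simps)
          then show ?thesis using True gb(2)[of x] h_nonneg[of x] by (simp add: ennreal_mult[symmetric])
        next
          case False
          then show ?thesis using True gx beyond[OF False True] by (simp add: h_def g_def)
        qed
      qed (simp add: h_def)
    qed
  qed
  finally have bound: "myerson_rev F f n \<le> ennreal c + of_nat n * ennreal ((?T - k) * (1 - F ?T))"
    using up' by (meson add_left_mono mult_left_mono order_trans zero_le)
  have "of_nat n * ennreal ((?T - k) * (1 - F ?T)) = ennreal (?T - k)"
    using FT qn n Tk0 by (simp add: ennreal_of_nat_eq_real_of_nat ennreal_mult[symmetric])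
  then have bound2: "myerson_rev F f n \<le> ennreal (c + (?T - k))"
    using bound Tk0 by (simp add: c_def)
  have "c + (?T - k) \<le> ?T / q"
  proof (cases "0 \<le> k")
    case True
    then have "c + (?T - k) = ?T" by (simp add: c_def)
    also have "\<dots> \<le> ?T / q" using q Tpos by (simp add: field_simps)
    finally show ?thesis .
  next
    case False
    have hyp_low: "(x - k) * g x \<le> 1 - F x" if "0 \<le> x" "x \<le> ?T" for x
    proof (cases "x \<in> I")
      case True
      then have fx: "0 < f x" by (rule fpos)
      have "x - (1 - F x) / f x \<le> k" using phi_le[OF True that(2)] by (simp add: phi_def vv_def)
      then show ?thesis using fx True by (simp add: g_def field_simps)
    next
      case False
      then show ?thesis using F_le1[of x] by (simp add: g_def)
    qed
    have "- k * F ?T \<le> ?T * (1 - F ?T)"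
      by (rule low) (use False Tpos hyp_low in auto)
    then have "- k * q \<le> ?T * (1 - q)" using FT by simp
    then have "- k \<le> ?T * (1 - q) / q" using q by (simp add: field_simps)
    then have "c + (?T - k) \<le> ?T + ?T * (1 - q) / q" using False by (simp add: c_def)
    also have "\<dots> = ?T / q" using q by (simp add: field_simps)
    finally show ?thesis .
  qed
  then show ?thesis using bound2 by (meson ennreal_leI order_trans)
qed

end

end
lemma pow_quarter: assumes "2 \<le> n" shows "1/4 \<le> (1 - 1 / real n) ^ n"
  using assms
proof (induction n rule: nat_induct_at_least)
  case base
  then show ?case by (simp add: power2_eq_square)
next
  case (Suc n)
  define r where "r = real n"
  have r2: "2 \<le> r" using Suc by (simp add: r_def)
  define a where "a = 1 - 1 / r"
  define b where "b = 1 - 1 / (r + 1)"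
  define x where "x = 1 / (r^2 - 1)"
  have rr: "4 \<le> r * r" using mult_mono[OF r2 r2] r2 by simp
  have x0: "0 \<le> x" using rr by (simp add: x_def power2_eq_square)
  have ab: "b = a * (1 + x)"
    using r2 rr by (simp add: a_def b_def x_def field_simps power2_eq_square)
  have a0: "0 \<le> a" using r2 by (simp add: a_def)
  have bx: "1 \<le> b * (1 + r * x)"
  proof -
    have r2r: "2 * r \<le> r * r" using mult_right_mono[OF r2, of r] r2 by simp
    have rrr: "0 \<le> r * (r * r)" using r2 by simp
    have d: "0 < r * r + r * (r * r) - (1 + r)" using r2r rrr r2 by linarith
    show ?thesis
      using r2 rr d by (simp add: b_def x_def field_simps power2_eq_square le_divide_eq)
  qed
  have e0: "(1 - 1 / real (Suc n)) ^ Suc n = b * b ^ n"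
    by (simp add: b_def r_def add.commute)
  have e1: "(1 - 1 / real (Suc n)) ^ Suc n = b * (a ^ n * (1 + x) ^ n)"
    unfolding e0 by (subst (2) ab) (simp add: power_mult_distrib)
  have "a ^ n * 1 \<le> a ^ n * (b * (1 + r * x))" using bx a0 by (intro mult_left_mono) auto
  also have "\<dots> = b * (a ^ n * (1 + r * x))" by simp
  also have "\<dots> \<le> b * (a ^ n * (1 + x) ^ n)"
    using Bernoulli_inequality[of x n] x0 a0 r2
    by (intro mult_left_mono) (auto simp: b_def r_def)
  finally have "a ^ n \<le> (1 - 1 / real (Suc n)) ^ Suc n" unfolding e1 by simp
  moreover have "1/4 \<le> a ^ n" using Suc.IH by (simp add: a_def r_def)
  ultimately show ?case by linarith
qed

theorem lemma3p3:
  fixes F f :: "real \<Rightarrow> real" and n :: nat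
  assumes "n \<ge> 2" and "regular F f"
  defines "T \<equiv> Finv F (1 - 1 / real n)"
  defines "p \<equiv> T * (1 - 1 / real n) ^ (n - 1)"
  shows "F T = 1 - 1 / real n
     \<and> equilibrium F n (\<lambda>_. p) (\<lambda>_. ereal T)
     \<and> revenue F n (\<lambda>_. p) (\<lambda>_. ereal T) = real n * T * (1 - F T) * F T ^ (n - 1)
     \<and> ennreal (revenue F n (\<lambda>_. p) (\<lambda>_. ereal T)) \<ge> (1/4) * myerson_rev F f n"
proof -
  from assms(2) obtain I where I: "is_interval I" "I \<noteq> {}" "I \<subseteq> {0..}"
      "\<forall>x\<in>I. f x > 0"
      "\<forall>x. ((\<lambda>t. if t \<in> I then f t else 0) has_integral F x) {..x}"
      "(F \<longlongrightarrow> 1) at_top" "mono_on I (vv F f)"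
    unfolding regular_def by blast
  interpret R: regset F f I by unfold_locales (use I in auto)
  define q where "q = 1 - 1 / real n"
  have n2: "2 \<le> real n" using assms(1) by simp
  have q: "0 < q" "q < 1" using n2 by (auto simp: q_def field_simps)
  have Teq: "T = R.T0 q" unfolding T_def q_def[symmetric] using R.Finv_eq[OF q] .
  have FT: "F T = q" using R.FT0[OF q] Teq by simp
  have Tpos: "0 < T" using R.T0_pos[OF q] Teq by simp
  have pq: "p = T * q ^ (n - 1)" by (simp add: p_def q_def)
  have qn: "1 - q = 1 / real n" by (simp add: q_def)
  have rev: "revenue F n (\<lambda>_. p) (\<lambda>_. ereal T) = real n * p * (1 - q)"
    unfolding revenue_def by (simp add: Fext_def FT)
  have rev2: "real n * p * (1 - q) = T * q ^ (n - 1)"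
    using n2 by (simp add: pq qn)
  have eq: "equilibrium F n (\<lambda>_. p) (\<lambda>_. ereal T)"
    unfolding equilibrium_def
  proof (intro allI impI conjI)
    fix i assume i: "i < n"
    show "0 \<le> ereal T" using Tpos by simp
    have card: "card ({..<n} - {i}) = n - 1" using i by simp
    have P: "(\<Prod>j\<in>{..<n} - {i}. Fext F (ereal T)) = q ^ (n - 1)"
      by (simp add: Fext_def FT card)
    show "ereal T = (let P = \<Prod>j\<in>{..<n} - {i}. Fext F (ereal T) in if P = 0 then \<infinity> else ereal (p / P))"
      unfolding Let_def P using q by (simp add: pq)
  qed
  have mb: "myerson_rev F f n \<le> ennreal (T / q)"
    using R.main_bound[OF q, of n] assms(1) qn Teq by simp
  have pw: "1/4 \<le> q ^ n" unfolding q_def by (rule pow_quarter[OF assms(1)])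
  have key: "T / q / 4 \<le> T * q ^ (n - 1)"
  proof -
    have "q ^ n = q * q ^ (n - 1)" using assms(1) by (simp add: power_eq_if)
    then have "1 \<le> 4 * (q * q ^ (n - 1))" using pw by simp
    then have "T \<le> T * (4 * (q * q ^ (n - 1)))" using Tpos by simp
    then show ?thesis using q by (simp add: field_simps)
  qed
  have "(1/4) * myerson_rev F f n \<le> (1/4) * ennreal (T / q)"
    by (rule mult_left_mono[OF mb]) simp
  also have "(1/4) * ennreal (T / q) = ennreal (T / q / 4)"
  proof -
    have "(1/4::ennreal) = ennreal 1 / ennreal 4" by simp
    also have "\<dots> = ennreal (1/4)" by (rule divide_ennreal) auto
    finally have "(1/4::ennreal) * ennreal (T / q) = ennreal (1/4) * ennreal (T / q)" by simp
    also have "\<dots> = ennreal (1/4 * (T / q))" using Tpos q by (subst ennreal_mult) auto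
    finally show ?thesis by (simp add: mult.commute)
  qed
  also have "\<dots> \<le> ennreal (revenue F n (\<lambda>_. p) (\<lambda>_. ereal T))"
    using key by (simp add: rev rev2 ennreal_leI)
  finally have last: "(1/4) * myerson_rev F f n \<le> ennreal (revenue F n (\<lambda>_. p) (\<lambda>_. ereal T))" .
  have rev3: "revenue F n (\<lambda>_. p) (\<lambda>_. ereal T) = real n * T * (1 - F T) * F T ^ (n - 1)"
    by (subst rev) (simp add: FT pq mult_ac)
  have c1: "F T = 1 - 1 / real n" using FT q_def by simp
  show ?thesis using c1 eq rev3 last by blast
qed

end
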